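(* Let $n,m$ be positive integers, $A_1,\dots,A_m\in\mathbb{S}_n$, $\mathcal{A}(X)=(\langle A_i,X\rangle)_{i=1}^m$, $\mathcal{A}^*(y)=\sum_i y_iA_i$, with $\mathcal{A}\mathcal{A}^*$ invertible; let $b\in\mathbb{R}^m$, $C\in\mathbb{S}_n$, $D:=\mathcal{A}^*((\mathcal{A}\mathcal{A}^* )^{-1}b)$ and $\mathcal{M}=\{S\in\mathbb{S}_n^+:\operatorname{diag}(S)=\mathbf{1}\}$. Fix $\sigma_k>0$, $y^k\in\mathbb{R}^m$, $\widetilde{X}^k\in\mathbb{S}_n$ and let $$\Phi_k(S)=\langle D,S+C\rangle-\langle\widetilde{X}^k,\mathcal{A}^*(y^k)-S-C\rangle+\tfrac{\sigma_k}{2}\|\mathcal{A}^*(y^k)-S-C\|^2 .$$ Then $S\in\mathcal{M}$ is a minimizer of $\Phi_k$ over $\mathcal{M}$ if and only if $$X:=\nabla\Phi_k(S)-\operatorname{Diag}(\nabla\Phi_k(S)S)\succeq0\quad\text{and}\quad XS=0,$$ where $\nabla\Phi_k(S)=\widetilde{X}^k-\sigma_k(\mathcal{A}^*(y^k)-S-C)+D$.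
   Context: $\mathbb{S}_n$ ($\mathbb{S}_n^+$) denotes real symmetric (positive semidefinite) $n\times n$ matrices, $\langle A,B\rangle=\mathrm{Tr}(A^{\intercal}B)$, $\|\cdot\|$ the Frobenius norm. For a square matrix $M$, $\operatorname{diag}(M)$ is the vector of its diagonal entries and $\operatorname{Diag}(M)$ the diagonal matrix with the same diagonal as $M$; $\mathbf{1}$ is the all-ones vector. *)

theory Defs
  imports "HOL-Analysis.Analysis"
begin

text \<open>n x n real matrices are real^'n^'n (n = CARD('n)); R^m is real^'m.\<close>

definition frob_inner :: "real^'n^'n \<Rightarrow> real^'n^'n \<Rightarrow> real" where
  "frob_inner A B = trace (transpose A ** B)"

definition frob_sq :: "real^'n^'n \<Rightarrow> real" where
  "frob_sq A = frob_inner A A"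

definition symmetric_mat :: "real^'n^'n \<Rightarrow> bool" where
  "symmetric_mat A \<longleftrightarrow> transpose A = A"

definition psd :: "real^'n^'n \<Rightarrow> bool" where
  "psd X \<longleftrightarrow> symmetric_mat X \<and> (\<forall>x. 0 \<le> x \<bullet> (X *v x))"

definition Diag_mat :: "real^'n^'n \<Rightarrow> real^'n^'n" where
  "Diag_mat M = (\<chi> i j. if i = j then M $ i $ i else 0)"

definition opA :: "('m \<Rightarrow> real^'n^'n) \<Rightarrow> real^'n^'n \<Rightarrow> real^'m" where
  "opA A X = (\<chi> i. frob_inner (A i) X)"

definition opAstar :: "('m::finite \<Rightarrow> real^'n^'n) \<Rightarrow> real^'m \<Rightarrow> real^'n^'n" where
  "opAstar A y = (\<Sum>i\<in>UNIV. y $ i *\<^sub>R A i)"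

definition AAstar :: "('m \<Rightarrow> real^'n^'n) \<Rightarrow> real^'m^'m" where
  "AAstar A = (\<chi> i j. frob_inner (A i) (A j))"

definition elliptope :: "(real^'n^'n) set" where
  "elliptope = {S. psd S \<and> (\<forall>i. S $ i $ i = 1)}"

end

theory Submission
  imports Defs
begin

lemma scal_deriv:
  fixes s a b c e f g :: real
  shows "((\<lambda>t. (s + t*a + t^2*b) / sqrt ((1 + t*c + t^2*e) * (1 + t*f + t^2*g)))
     has_real_derivative (a - s*(c+f)/2)) (at 0)"
  apply (rule derivative_eq_intros refl | simp)+
  done

lemma qform_sum: "x \<bullet> (M *v x) = (\<Sum>i\<in>UNIV. \<Sum>j\<in>UNIV. x$i * M$i$j * x$j)"
  by (simp add: inner_vec_def matrix_vector_mult_def sum_distrib_left mult.assoc)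

lemma frob_sum: "frob_inner A B = (\<Sum>i\<in>UNIV. \<Sum>j\<in>UNIV. A$i$j * B$i$j)"
proof -
  have "frob_inner A B = (\<Sum>i\<in>UNIV. \<Sum>k\<in>UNIV. A$k$i * B$k$i)"
    by (simp add: frob_inner_def trace_def transpose_def matrix_matrix_mult_def)
  also have "\<dots> = (\<Sum>k\<in>UNIV. \<Sum>i\<in>UNIV. A$k$i * B$k$i)" by (rule sum.swap)
  finally show ?thesis .
qed

lemma sym_iff: "symmetric_mat M \<longleftrightarrow> (\<forall>i j. M$i$j = M$j$i)"
  unfolding symmetric_mat_def transpose_def vec_eq_iff by auto

definition nrm :: "real^'n^'n \<Rightarrow> real^'n^'n" where
  "nrm P = (\<chi> i j. P$i$j / sqrt (P$i$i * P$j$j))"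

lemma nrm_elliptope:
  assumes "psd P" "\<And>i. P$i$i > 0"
  shows "nrm P \<in> elliptope"
proof -
  have sym: "\<forall>i j. P$i$j = P$j$i" using assms(1) by (simp add: psd_def sym_iff)
  have "symmetric_mat (nrm P)" unfolding sym_iff nrm_def using sym by (simp add: mult.commute)
  moreover have "0 \<le> x \<bullet> (nrm P *v x)" for x
  proof -
    define w where "w = (\<chi> i. x$i / sqrt (P$i$i))"
    have "x \<bullet> (nrm P *v x) = w \<bullet> (P *v w)"
      unfolding qform_sum w_def nrm_def
      by (intro sum.cong refl) (simp add: real_sqrt_mult)
    also have "\<dots> \<ge> 0" using assms(1) by (simp add: psd_def)
    finally show ?thesis .
  qed
  moreover have "nrm P $ i $ i = 1" for i
    using assms(2)[of i] by (simp add: nrm_def real_sqrt_mult[symmetric])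
  ultimately show ?thesis by (simp add: elliptope_def psd_def)
qed

lemma first_order:
  fixes G S a b :: "real^'n^'n"
  assumes Sd: "\<And>i. S$i$i = 1"
    and opt: "\<forall>T\<in>elliptope. frob_inner G S \<le> frob_inner G T"
    and dpos: "\<delta> > 0"
    and psdP: "\<And>t. 0 < t \<Longrightarrow> t < \<delta> \<Longrightarrow> psd (S + t *\<^sub>R a + t^2 *\<^sub>R b)"
  shows "0 \<le> (\<Sum>i\<in>UNIV. \<Sum>j\<in>UNIV. G$i$j * (a$i$j - S$i$j * (a$i$i + a$j$j)/2))"
proof -
  define p where "p i t = 1 + t * a$i$i + t^2 * b$i$i" for i t
  define h where "h t = (\<Sum>i\<in>UNIV. \<Sum>j\<in>UNIV. G$i$j *
      ((S$i$j + t * a$i$j + t^2 * b$i$j) / sqrt ((1 + t * a$i$i + t^2 * b$i$i) * (1 + t * a$j$j + t^2 * b$j$j))))" for t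
  define D where "D = (\<Sum>i\<in>UNIV. \<Sum>j\<in>UNIV. G$i$j * (a$i$j - S$i$j * (a$i$i + a$j$j)/2))"
  have der: "(h has_real_derivative D) (at 0)"
    unfolding h_def D_def
    apply (rule DERIV_sum)
    apply (rule DERIV_sum)
    apply (rule DERIV_cmult)
    apply (rule scal_deriv)
    done
  have h0: "h 0 = frob_inner G S" by (simp add: h_def frob_sum)
  have evp: "\<forall>\<^sub>F t in at_right 0. \<forall>i. p i t > 0"
  proof (rule eventually_all_finite)
    fix i
    have "((\<lambda>t. p i t) \<longlongrightarrow> p i 0) (at_right 0)"
      unfolding p_def by (intro tendsto_intros)
    moreover have "p i 0 > 0" by (simp add: p_def)
    ultimately show "\<forall>\<^sub>F t in at_right 0. p i t > 0" by (rule order_tendstoD)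
  qed
  have evd: "\<forall>\<^sub>F t in at_right (0::real). 0 < t \<and> t < \<delta>"
    using eventually_at_right_real[OF dpos] by (rule eventually_mono) auto
  have "\<forall>\<^sub>F t in at_right 0. 0 \<le> (h (0 + t) - h 0) / t"
    using evp evd
  proof eventually_elim
    case (elim t)
    define P where "P = S + t *\<^sub>R a + t^2 *\<^sub>R b"
    have Pd: "P$i$i = p i t" for i by (simp add: P_def p_def Sd)
    have "nrm P \<in> elliptope"
      using psdP[of t] elim Pd by (intro nrm_elliptope) (auto simp: P_def)
    hence "h 0 \<le> frob_inner G (nrm P)" using opt h0 by auto
    also have "frob_inner G (nrm P) = h t"
      unfolding frob_sum h_def nrm_def
      by (intro sum.cong refl) (simp add: P_def Sd)
    finally show ?case using elim by simp
  qed
  moreover have "((\<lambda>t. (h (0 + t) - h 0) / t) \<longlongrightarrow> D) (at_right 0)"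
    using der unfolding DERIV_def by (rule tendsto_mono[OF at_within_le_at])
  ultimately have "0 \<le> D"
    by (intro tendsto_lowerbound[where F="at_right 0"]) (auto simp: trivial_limit_at_right_real)
  thus ?thesis by (simp add: D_def)
qed


lemma Mv_axis: "(M *v axis a l) $ i = M$i$a * l"
proof -
  have "(M *v axis a l) $ i = (\<Sum>j\<in>UNIV. M$i$j * (axis a l)$j)"
    by (simp add: matrix_vector_mult_def)
  also have "\<dots> = (\<Sum>j\<in>UNIV. if j = a then M$i$j * l else 0)"
    by (rule sum.cong) (auto simp: axis_def)
  finally show ?thesis by simp
qed

lemma qform_shift:
  assumes sym: "\<forall>i j. M$i$j = M$j$i"
  shows "(x + axis a l) \<bullet> (M *v (x + axis a l)) =
     x \<bullet> (M *v x) + 2*l*(\<Sum>j\<in>UNIV. M$a$j * x$j) + l^2 * M$a$a"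
proof -
  have 1: "axis a l \<bullet> (M *v x) = l * (\<Sum>j\<in>UNIV. M$a$j * x$j)"
    by (simp add: inner_axis' matrix_vector_mult_def)
  have 2: "x \<bullet> (M *v axis a l) = l * (\<Sum>j\<in>UNIV. M$a$j * x$j)"
    by (simp add: inner_vec_def Mv_axis sum_distrib_left sym mult_ac)
  have 3: "axis a l \<bullet> (M *v axis a l) = l^2 * M$a$a"
    by (simp add: inner_axis' Mv_axis power2_eq_square)
  show ?thesis
    by (simp add: matrix_vector_right_distrib inner_add_left inner_add_right 1 2 3)
qed

lemma psd_decomp_gen:
  fixes I :: "'n::finite set"
  shows "\<forall>M::real^'n^'n. (\<forall>i j. M$i$j = M$j$i) \<and> (\<forall>x. 0 \<le> x \<bullet> (M *v x))
      \<and> (\<forall>i j. i \<notin> I \<longrightarrow> M$i$j = 0)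
      \<longrightarrow> (\<exists>v. \<forall>i j. M$i$j = (\<Sum>k\<in>I. v k $ i * v k $ j))"
proof -
  have "finite I" by simp
  thus ?thesis
  proof (induction I rule: finite_induct)
    case empty
    show ?case by simp
  next
    case (insert a I)
    show ?case
    proof (intro allI impI)
      fix M :: "real^'n^'n"
      assume H: "(\<forall>i j. M$i$j = M$j$i) \<and> (\<forall>x. 0 \<le> x \<bullet> (M *v x))
      \<and> (\<forall>i j. i \<notin> insert a I \<longrightarrow> M$i$j = 0)"
      have sym: "\<forall>i j. M$i$j = M$j$i" and pos: "\<And>x. 0 \<le> x \<bullet> (M *v x)"
        and sup: "\<And>i j. i \<notin> insert a I \<Longrightarrow> M$i$j = 0" using H by auto
      define r where "r x = (\<Sum>j\<in>UNIV. M$a$j * x$j)" for x :: "real^'n"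
      have r_alt: "r x = (M *v x)$a" for x by (simp add: r_def matrix_vector_mult_def)
      have key: "0 \<le> x \<bullet> (M *v x) + 2*l*r x + l^2 * M$a$a" for x l
        using pos[of "x + axis a l"] qform_shift[OF sym, of x a l] by (simp add: r_def)
      have maa: "M$a$a \<ge> 0" using key[of 0 1] by (simp add: r_def)
      show "\<exists>v. \<forall>i j. M$i$j = (\<Sum>k\<in>insert a I. v k $ i * v k $ j)"
      proof (cases "M$a$a = 0")
        case True
        have r0: "r x = 0" for x
        proof (rule ccontr)
          assume "r x \<noteq> 0"
          have "0 \<le> x \<bullet> (M *v x) + 2*(-(x \<bullet> (M *v x) + 1)/(2 * r x))*r x"
            using key[of x "-(x \<bullet> (M *v x) + 1)/(2 * r x)"] True by simp
          also have "\<dots> = -1" using \<open>r x \<noteq> 0\<close> by (simp add: field_simps)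
          finally show False by simp
        qed
        have row: "M$a$j = 0" for j
          using r0[of "axis j 1"] unfolding r_alt Mv_axis by simp
        have "\<forall>i j. i \<notin> I \<longrightarrow> M$i$j = 0"
          using sup row by (metis insert_iff)
        then obtain v where v: "\<forall>i j. M$i$j = (\<Sum>k\<in>I. v k $ i * v k $ j)"
          using insert.IH H by blast
        show ?thesis
        proof (intro exI allI)
          fix i j
          have "(\<Sum>k\<in>insert a I. (v(a:=0)) k $ i * (v(a:=0)) k $ j)
              = (\<Sum>k\<in>I. v k $ i * v k $ j)"
            using insert.hyps by (simp add: sum.insert) (intro sum.cong, auto)
          thus "M$i$j = (\<Sum>k\<in>insert a I. (v(a:=0)) k $ i * (v(a:=0)) k $ j)"
            using v by simp
        qed
      next
        case False
        hence mpos: "M$a$a > 0" using maa by simp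
        define m where "m = M$a$a"
        define u where "u = (\<chi> i. M$i$a / sqrt m)"
        define M' where "M' = (\<chi> i j. M$i$j - M$i$a * M$a$j / m)"
        have uu: "u$i * u$j = M$i$a * M$a$j / m" for i j
          using mpos sym by (simp add: u_def m_def real_sqrt_mult[symmetric])
        have sym': "\<forall>i j. M'$i$j = M'$j$i" using sym by (simp add: M'_def mult.commute)
        have q': "x \<bullet> (M' *v x) = x \<bullet> (M *v x) - (r x)^2 / m" for x
        proof -
          have "x \<bullet> (M' *v x) = (\<Sum>i\<in>UNIV. \<Sum>j\<in>UNIV. x$i * M$i$j * x$j)
               - (\<Sum>i\<in>UNIV. \<Sum>j\<in>UNIV. (x$i * M$i$a) * (M$a$j * x$j)) / m"
            by (simp add: qform_sum M'_def algebra_simps sum_subtractf sum_divide_distrib)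
          also have "(\<Sum>i\<in>UNIV. \<Sum>j\<in>UNIV. (x$i * M$i$a) * (M$a$j * x$j)) = (r x)^2"
            unfolding r_def power2_eq_square sum_product
            by (intro sum.cong refl) (simp add: sym)
          finally show ?thesis by (simp add: qform_sum)
        qed
        have pos': "0 \<le> x \<bullet> (M' *v x)" for x
        proof -
          have "0 \<le> x \<bullet> (M *v x) + 2*(- r x / m)*r x + (- r x / m)^2 * m"
            using key[of x "- r x / m"] by (simp add: m_def)
          also have "\<dots> = x \<bullet> (M *v x) - (r x)^2 / m"
            using mpos by (simp add: m_def field_simps power2_eq_square)
          finally show ?thesis using q' by simp
        qed
        have sup': "\<forall>i j. i \<notin> I \<longrightarrow> M'$i$j = 0"
        proof (intro allI impI)
          fix i j assume "i \<notin> I"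
          show "M'$i$j = 0"
          proof (cases "i = a")
            case True thus ?thesis using mpos by (simp add: M'_def m_def)
          next
            case False thus ?thesis using \<open>i \<notin> I\<close> sup by (simp add: M'_def)
          qed
        qed
        obtain v where v: "\<forall>i j. M'$i$j = (\<Sum>k\<in>I. v k $ i * v k $ j)"
          using insert.IH sym' pos' sup' by blast
        show ?thesis
        proof (intro exI allI)
          fix i j
          have "(\<Sum>k\<in>insert a I. (v(a:=u)) k $ i * (v(a:=u)) k $ j)
              = u$i * u$j + (\<Sum>k\<in>I. v k $ i * v k $ j)"
            using insert.hyps by (simp add: sum.insert) (intro sum.cong, auto)
          also have "\<dots> = M$i$j"
          proof -
            have "M'$i$j = M$i$j - M$i$a*M$a$j/m" by (simp add: M'_def)
            thus ?thesis using v[rule_format, of i j] uu[of i j] by linarith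
          qed
          finally show "M$i$j = (\<Sum>k\<in>insert a I. (v(a:=u)) k $ i * (v(a:=u)) k $ j)"
            by simp
        qed
      qed
    qed
  qed
qed

lemma psd_decomp:
  fixes M :: "real^'n^'n"
  assumes "psd M"
  shows "\<exists>v::'n \<Rightarrow> real^'n. \<forall>i j. M$i$j = (\<Sum>k\<in>UNIV. v k $ i * v k $ j)"
  by (rule psd_decomp_gen[of UNIV, rule_format]) (use assms in \<open>auto simp: psd_def sym_iff\<close>)

lemma frob_psd_nonneg:
  fixes X T :: "real^'n^'n"
  assumes "psd X" "psd T"
  shows "0 \<le> frob_inner X T"
proof -
  obtain v :: "'n \<Rightarrow> real^'n" where v: "\<forall>i j. T$i$j = (\<Sum>k\<in>UNIV. v k $ i * v k $ j)"
    using psd_decomp[OF assms(2)] by blast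
  have "frob_inner X T = (\<Sum>i\<in>UNIV. \<Sum>j\<in>UNIV. \<Sum>k\<in>UNIV. v k $ i * X$i$j * v k $ j)"
    by (simp add: frob_sum v sum_distrib_left mult_ac)
  also have "\<dots> = (\<Sum>i\<in>UNIV. \<Sum>k\<in>UNIV. \<Sum>j\<in>UNIV. v k $ i * X$i$j * v k $ j)"
    by (rule sum.cong[OF refl]) (rule sum.swap)
  also have "\<dots> = (\<Sum>k\<in>UNIV. \<Sum>i\<in>UNIV. \<Sum>j\<in>UNIV. v k $ i * X$i$j * v k $ j)"
    by (rule sum.swap)
  also have "\<dots> = (\<Sum>k\<in>UNIV. v k \<bullet> (X *v v k))"
    by (simp add: qform_sum)
  also have "\<dots> \<ge> 0" using assms(1) by (intro sum_nonneg) (simp add: psd_def)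
  finally show ?thesis .
qed


lemma frob_diff: "frob_inner G (A - B) = frob_inner G A - frob_inner G B"
  by (simp add: frob_sum sum_subtractf algebra_simps)

lemma frob_ldiff: "frob_inner (A - B) T = frob_inner A T - frob_inner B T"
  by (simp add: frob_sum sum_subtractf algebra_simps)

lemma frob_scale: "frob_inner G (u *\<^sub>R W) = u * frob_inner G W"
  by (simp add: frob_sum sum_distrib_left mult_ac)

lemma frob_sq_scale: "frob_sq (u *\<^sub>R W) = u^2 * frob_sq W"
  by (simp add: frob_sq_def frob_sum sum_distrib_left mult_ac power2_eq_square)

lemma frob_sq_nonneg: "0 \<le> frob_sq W"
  by (simp add: frob_sq_def frob_sum sum_nonneg)

lemma frob_Diag: "frob_inner (Diag_mat M) T = (\<Sum>i\<in>UNIV. M$i$i * T$i$i)"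
proof -
  have "frob_inner (Diag_mat M) T = (\<Sum>i\<in>UNIV. \<Sum>j\<in>UNIV. if j = i then M$i$i * T$i$i else 0)"
    unfolding frob_sum by (intro sum.cong refl) (auto simp: Diag_mat_def)
  thus ?thesis by simp
qed

lemma Diag_mv: "Diag_mat M *v x = (\<chi> i. M$i$i * x$i)"
proof -
  have "(Diag_mat M *v x)$i = M$i$i * x$i" for i
  proof -
    have "(Diag_mat M *v x)$i = (\<Sum>j\<in>UNIV. Diag_mat M $i$j * x$j)"
      by (simp add: matrix_vector_mult_def)
    also have "\<dots> = (\<Sum>j\<in>UNIV. if j = i then M$i$i * x$i else 0)"
      by (rule sum.cong) (auto simp: Diag_mat_def)
    finally show ?thesis by simp
  qed
  thus ?thesis by (simp add: vec_eq_iff)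
qed

lemma frob_trace: "symmetric_mat S \<Longrightarrow> frob_inner X S = trace (X ** S)"
  unfolding frob_sum trace_def matrix_matrix_mult_def sym_iff by simp

lemma frob_swap:
  assumes "symmetric_mat S"
  shows "frob_inner X (Z ** S) = frob_inner (X ** S) Z"
proof -
  have "frob_inner X (Z ** S) = trace ((transpose X ** Z) ** S)"
    by (simp add: frob_inner_def matrix_mul_assoc)
  also have "\<dots> = trace (S ** (transpose X ** Z))" by (rule trace_mul_sym)
  also have "\<dots> = trace ((S ** transpose X) ** Z)" by (simp add: matrix_mul_assoc)
  also have "S ** transpose X = transpose (X ** S)"
    using assms by (simp add: matrix_transpose_mul symmetric_mat_def)
  finally show ?thesis by (simp add: frob_inner_def)
qed

lemma Lsum:
  fixes G S :: "real^'n^'n"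
  assumes Gs: "\<forall>i j. G$i$j = G$j$i" and Ss: "\<forall>i j. S$i$j = S$j$i"
  shows "(\<Sum>i\<in>UNIV. \<Sum>j\<in>UNIV. G$i$j * S$i$j * (u i + u j) / 2) = (\<Sum>i\<in>UNIV. u i * (G**S)$i$i)"
proof -
  have e1: "(\<Sum>i\<in>UNIV. \<Sum>j\<in>UNIV. G$i$j * S$i$j * u i) = (\<Sum>i\<in>UNIV. u i * (G**S)$i$i)"
    by (simp add: matrix_matrix_mult_def sum_distrib_left Ss mult_ac)
  have "(\<Sum>i\<in>UNIV. \<Sum>j\<in>UNIV. G$i$j * S$i$j * u j) = (\<Sum>j\<in>UNIV. \<Sum>i\<in>UNIV. G$i$j * S$i$j * u j)"
    by (rule sum.swap)
  also have "\<dots> = (\<Sum>j\<in>UNIV. u j * (G**S)$j$j)"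
    by (simp add: matrix_matrix_mult_def sum_distrib_left Ss Gs mult_ac)
  finally have e2: "(\<Sum>i\<in>UNIV. \<Sum>j\<in>UNIV. G$i$j * S$i$j * u j) = (\<Sum>i\<in>UNIV. u i * (G**S)$i$i)" .
  have "(\<Sum>i\<in>UNIV. \<Sum>j\<in>UNIV. G$i$j * S$i$j * (u i + u j) / 2)
     = ((\<Sum>i\<in>UNIV. \<Sum>j\<in>UNIV. G$i$j * S$i$j * u i) + (\<Sum>i\<in>UNIV. \<Sum>j\<in>UNIV. G$i$j * S$i$j * u j)) / 2"
    by (simp add: sum.distrib sum_divide_distrib distrib_left add_divide_distrib)
  thus ?thesis using e1 e2 by simp
qed

lemma conv_ell:
  assumes "S \<in> elliptope" "T \<in> elliptope" "0 \<le> u" "u \<le> 1"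
  shows "S + u *\<^sub>R (T - S) \<in> elliptope"
proof -
  have "x \<bullet> ((S + u *\<^sub>R (T - S)) *v x) = (1 - u) * (x \<bullet> (S *v x)) + u * (x \<bullet> (T *v x))" for x
    by (simp add: qform_sum algebra_simps sum.distrib sum_subtractf sum_distrib_left)
  moreover have "0 \<le> (1 - u) * (x \<bullet> (S *v x)) + u * (x \<bullet> (T *v x))" for x
    using assms by (intro add_nonneg_nonneg mult_nonneg_nonneg) (auto simp: elliptope_def psd_def)
  moreover have "symmetric_mat (S + u *\<^sub>R (T - S))"
    using assms by (auto simp: elliptope_def psd_def sym_iff)
  ultimately show ?thesis using assms by (auto simp: elliptope_def psd_def)
qed

lemma mat_rdistrib: "(A + B) ** C = A ** C + B ** (C :: real^'n^'n)"
  by (simp add: matrix_matrix_mult_def vec_eq_iff distrib_right sum.distrib)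

lemma congr_psd:
  fixes S M :: "real^'n^'n"
  assumes "psd S"
  shows "psd (M ** S ** transpose M)"
proof -
  have "transpose (M ** S ** transpose M) = M ** S ** transpose M"
    using assms by (simp add: matrix_transpose_mul psd_def symmetric_mat_def matrix_mul_assoc)
  moreover have "0 \<le> z \<bullet> ((M ** S ** transpose M) *v z)" for z
  proof -
    have "z \<bullet> ((M ** S ** transpose M) *v z) = (z v* M) \<bullet> (S *v (transpose M *v z))"
      by (simp add: matrix_vector_mul_assoc[symmetric] dot_lmul_matrix matrix_mul_assoc)
    also have "z v* M = transpose M *v z"
      using vector_transpose_matrix[of z "transpose M"] by simp
    finally show ?thesis using assms by (simp add: psd_def)
  qed
  ultimately show ?thesis by (simp add: psd_def symmetric_mat_def)
qed

lemma opAstar_sym: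
  assumes "\<And>i. symmetric_mat (A i)"
  shows "\<forall>i j. opAstar A w $ i $ j = opAstar A w $ j $ i"
  using assms by (simp add: opAstar_def sum_component sym_iff)


theorem lemma3p2:
  fixes A :: "'m::finite \<Rightarrow> real^'n^'n"
    and b :: "real^'m" and C Xt :: "real^'n^'n" and y :: "real^'m"
    and \<sigma> :: real and S :: "real^'n^'n"
  assumes symA: "\<And>i. symmetric_mat (A i)"
    and inv: "invertible (AAstar A)"
    and symC: "symmetric_mat C"
    and symXt: "symmetric_mat Xt"
    and sig: "\<sigma> > 0"
    and SM: "S \<in> elliptope"
  defines "D \<equiv> opAstar A (matrix_inv (AAstar A) *v b)"
  defines "\<Phi> \<equiv> \<lambda>T. frob_inner D (T + C) - frob_inner Xt (opAstar A y - T - C)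
                     + \<sigma> / 2 * frob_sq (opAstar A y - T - C)"
  defines "G \<equiv> Xt - \<sigma> *\<^sub>R (opAstar A y - S - C) + D"
  shows "(\<forall>T\<in>elliptope. \<Phi> S \<le> \<Phi> T) \<longleftrightarrow>
         (psd (G - Diag_mat (G ** S)) \<and> (G - Diag_mat (G ** S)) ** S = 0)"
proof -
  define R where "R = opAstar A y"
  have Ssym: "\<forall>i j. S$i$j = S$j$i" and Sd: "\<And>i. S$i$i = 1" and Spsd: "psd S"
    using SM by (auto simp: elliptope_def psd_def sym_iff)
  have Dsym: "\<forall>i j. D$i$j = D$j$i" unfolding D_def by (rule opAstar_sym[OF symA])
  have Rsym: "\<forall>i j. R$i$j = R$j$i" unfolding R_def by (rule opAstar_sym[OF symA])
  have Gsym: "\<forall>i j. G$i$j = G$j$i"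
    using Dsym Rsym Ssym symC symXt by (simp add: G_def R_def[symmetric] sym_iff)
  define X where "X = G - Diag_mat (G ** S)"
  have Xent: "X$i$j = G$i$j - (if i = j then (G**S)$i$i else 0)" for i j
    by (simp add: X_def Diag_mat_def)
  have PhiT: "\<Phi> T = (\<Sum>i\<in>UNIV. \<Sum>j\<in>UNIV. D$i$j*(T$i$j + C$i$j) - Xt$i$j*(R$i$j - T$i$j - C$i$j)
        + \<sigma>/2*(R$i$j - T$i$j - C$i$j)^2)" for T
    by (simp add: \<Phi>_def R_def[symmetric] frob_sq_def frob_sum sum_subtractf sum.distrib
        sum_distrib_left power2_eq_square)
  have Phi_diff: "\<Phi> T - \<Phi> S = frob_inner G (T - S) + \<sigma>/2 * frob_sq (T - S)" for T
  proof -
    have "\<Phi> T - \<Phi> S = (\<Sum>i\<in>UNIV. \<Sum>j\<in>UNIV.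
        (D$i$j*(T$i$j + C$i$j) - Xt$i$j*(R$i$j - T$i$j - C$i$j) + \<sigma>/2*(R$i$j - T$i$j - C$i$j)^2)
      - (D$i$j*(S$i$j + C$i$j) - Xt$i$j*(R$i$j - S$i$j - C$i$j) + \<sigma>/2*(R$i$j - S$i$j - C$i$j)^2))"
      unfolding PhiT by (simp only: sum_subtractf)
    also have "\<dots> = (\<Sum>i\<in>UNIV. \<Sum>j\<in>UNIV. G$i$j * (T$i$j - S$i$j) + \<sigma>/2 * ((T$i$j - S$i$j) * (T$i$j - S$i$j)))"
      by (intro sum.cong refl) (simp add: G_def R_def[symmetric] power2_eq_square algebra_simps)
    also have "\<dots> = frob_inner G (T - S) + \<sigma>/2 * frob_sq (T - S)"
      by (simp add: frob_sq_def frob_sum sum.distrib sum_distrib_left)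
    finally show ?thesis .
  qed
  have lin: "(\<forall>T\<in>elliptope. \<Phi> S \<le> \<Phi> T) \<longleftrightarrow> (\<forall>T\<in>elliptope. frob_inner G S \<le> frob_inner G T)"
  proof
    assume H: "\<forall>T\<in>elliptope. frob_inner G S \<le> frob_inner G T"
    show "\<forall>T\<in>elliptope. \<Phi> S \<le> \<Phi> T"
    proof
      fix T :: "real^'n^'n" assume "T \<in> elliptope"
      hence "0 \<le> frob_inner G (T - S)" using H by (simp add: frob_diff)
      moreover have "0 \<le> \<sigma>/2 * frob_sq (T - S)" using sig frob_sq_nonneg[of "T - S"] by simp
      ultimately show "\<Phi> S \<le> \<Phi> T" using Phi_diff[of T] by linarith
    qed
  next
    assume H: "\<forall>T\<in>elliptope. \<Phi> S \<le> \<Phi> T"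
    show "\<forall>T\<in>elliptope. frob_inner G S \<le> frob_inner G T"
    proof (rule ballI, rule ccontr)
      fix T :: "real^'n^'n" assume T: "T \<in> elliptope" and neg: "\<not> frob_inner G S \<le> frob_inner G T"
      define g where "g = frob_inner G (T - S)"
      define N where "N = frob_sq (T - S)"
      have gneg: "g < 0" using neg by (simp add: g_def frob_diff)
      have N0: "N \<ge> 0" by (simp add: N_def frob_sq_nonneg)
      define u where "u = min 1 (- g / (\<sigma> * N + 1))"
      have P: "\<sigma> * N + 1 > 0" using sig N0 by (smt (verit) mult_nonneg_nonneg)
      hence u0: "0 < u" using gneg by (simp add: u_def divide_neg_pos)
      have u1: "u \<le> 1" by (simp add: u_def)
      have "S + u *\<^sub>R (T - S) \<in> elliptope" using conv_ell[OF SM T] u0 u1 by simp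
      hence "0 \<le> \<Phi> (S + u *\<^sub>R (T - S)) - \<Phi> S" using H by auto
      also have "\<dots> = u * g + \<sigma>/2 * u^2 * N"
        using Phi_diff[of "S + u *\<^sub>R (T - S)"]
        by (simp add: frob_scale frob_sq_scale g_def N_def)
      finally have "0 \<le> u * (g + \<sigma>/2 * u * N)" by (simp add: algebra_simps power2_eq_square)
      hence "0 \<le> g + \<sigma>/2 * u * N" using u0 by (simp add: zero_le_mult_iff)
      moreover have "\<sigma> * u * N \<le> - g"
      proof -
        have "u * (\<sigma> * N + 1) \<le> - g"
        proof (cases "1 \<le> - g / (\<sigma> * N + 1)")
          case True
          hence "u = 1" by (simp add: u_def)
          moreover have "\<sigma> * N + 1 \<le> - g" using True P by (simp add: le_divide_eq divide_le_eq)
          ultimately show ?thesis by simp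
        next
          case False
          hence "u = - g / (\<sigma> * N + 1)" by (simp add: u_def)
          thus ?thesis using P by simp
        qed
        thus ?thesis using u0 by (simp add: algebra_simps)
      qed
      moreover have "\<sigma>/2 * u * N = (\<sigma> * u * N) / 2" by simp
      ultimately show False using gneg by linarith
    qed
  qed
  have XG: "frob_inner X T = frob_inner G T - (\<Sum>i\<in>UNIV. (G**S)$i$i * T$i$i)" for T
    by (simp add: X_def frob_ldiff frob_Diag)
  have bwd: "\<forall>T\<in>elliptope. frob_inner G S \<le> frob_inner G T" if H: "psd X" "X ** S = 0"
  proof
    fix T :: "real^'n^'n" assume T: "T \<in> elliptope"
    have Td: "T$i$i = 1" for i using T by (simp add: elliptope_def)
    have "frob_inner X S = trace (X ** S)"
      by (rule frob_trace) (use Ssym in \<open>simp add: sym_iff\<close>)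
    hence XS0: "frob_inner X S = 0" using H(2) by (simp add: trace_def)
    have "0 \<le> frob_inner X T" using frob_psd_nonneg[OF H(1)] T by (simp add: elliptope_def)
    thus "frob_inner G S \<le> frob_inner G T" using XG[of T] XG[of S] XS0 by (simp add: Td Sd)
  qed
  have fwd: "psd X \<and> X ** S = 0" if opt: "\<forall>T\<in>elliptope. frob_inner G S \<le> frob_inner G T"
  proof -
    have FO: "0 \<le> (\<Sum>i\<in>UNIV. \<Sum>j\<in>UNIV. G$i$j * (a$i$j - S$i$j * (a$i$i + a$j$j)/2))"
      if "\<And>t. 0 < t \<Longrightarrow> t < 1 \<Longrightarrow> psd (S + t *\<^sub>R a + t^2 *\<^sub>R bb)" for a bb
      by (rule first_order[OF Sd opt, of 1 a bb]) (use that in auto)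
    have split: "(\<Sum>i\<in>UNIV. \<Sum>j\<in>UNIV. G$i$j * (a$i$j - S$i$j * (a$i$i + a$j$j)/2))
        = (\<Sum>i\<in>UNIV. \<Sum>j\<in>UNIV. G$i$j * a$i$j) - (\<Sum>i\<in>UNIV. a$i$i * (G**S)$i$i)" for a
    proof -
      have "(\<Sum>i\<in>UNIV. \<Sum>j\<in>UNIV. G$i$j * (a$i$j - S$i$j * (a$i$i + a$j$j)/2))
        = (\<Sum>i\<in>UNIV. \<Sum>j\<in>UNIV. G$i$j * a$i$j) - (\<Sum>i\<in>UNIV. \<Sum>j\<in>UNIV. G$i$j * S$i$j * (a$i$i + a$j$j)/2)"
        by (simp add: sum_subtractf right_diff_distrib mult.assoc)
      also have "(\<Sum>i\<in>UNIV. \<Sum>j\<in>UNIV. G$i$j * S$i$j * (a$i$i + a$j$j)/2) = (\<Sum>i\<in>UNIV. a$i$i * (G**S)$i$i)"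
        by (rule Lsum[OF Gsym Ssym])
      finally show ?thesis .
    qed
    have XZ: "0 \<le> frob_inner X (Y ** S)" for Y
    proof -
      define Z where "Z = Y ** S"
      define a where "a = Z + transpose Z"
      define bb where "bb = Z ** transpose Y"
      have "S + t *\<^sub>R a + t^2 *\<^sub>R bb = (mat 1 + t *\<^sub>R Y) ** S ** transpose (mat 1 + t *\<^sub>R Y)" for t
      proof -
        have tr: "transpose (mat 1 + t *\<^sub>R Y) = mat 1 + t *\<^sub>R transpose Y"
          by (simp add: transpose_def mat_def vec_eq_iff)
        have SYt: "S ** transpose Y = transpose Z"
          using Ssym by (simp add: Z_def matrix_transpose_mul sym_iff[symmetric] symmetric_mat_def)
        show ?thesis
          unfolding tr mat_rdistrib matrix_add_ldistrib
          by (simp add: matrix_scalar_ac scalar_matrix_assoc[symmetric] SYt a_def bb_def Z_def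
              matrix_mul_assoc power2_eq_square algebra_simps)
      qed
      hence "psd (S + t *\<^sub>R a + t^2 *\<^sub>R bb)" for t
        by (simp only:) (rule congr_psd[OF Spsd])
      hence "0 \<le> (\<Sum>i\<in>UNIV. \<Sum>j\<in>UNIV. G$i$j * (a$i$j - S$i$j * (a$i$i + a$j$j)/2))"
        by (rule FO)
      also have "\<dots> = 2 * frob_inner X Z"
      proof -
        have "(\<Sum>i\<in>UNIV. \<Sum>j\<in>UNIV. G$i$j * a$i$j)
            = (\<Sum>i\<in>UNIV. \<Sum>j\<in>UNIV. G$i$j * Z$i$j) + (\<Sum>i\<in>UNIV. \<Sum>j\<in>UNIV. G$i$j * Z$j$i)"
          by (simp add: a_def transpose_def distrib_left sum.distrib)
        also have "(\<Sum>i\<in>UNIV. \<Sum>j\<in>UNIV. G$i$j * Z$j$i) = (\<Sum>j\<in>UNIV. \<Sum>i\<in>UNIV. G$i$j * Z$j$i)"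
          by (rule sum.swap)
        also have "\<dots> = (\<Sum>i\<in>UNIV. \<Sum>j\<in>UNIV. G$i$j * Z$i$j)"
          using Gsym by simp
        finally have 1: "(\<Sum>i\<in>UNIV. \<Sum>j\<in>UNIV. G$i$j * a$i$j) = 2 * (\<Sum>i\<in>UNIV. \<Sum>j\<in>UNIV. G$i$j * Z$i$j)"
          by simp
        have 2: "(\<Sum>i\<in>UNIV. a$i$i * (G**S)$i$i) = 2 * (\<Sum>i\<in>UNIV. (G**S)$i$i * Z$i$i)"
          by (simp add: a_def transpose_def sum_distrib_left algebra_simps)
        show ?thesis unfolding split 1 2 XG by (simp add: frob_sum right_diff_distrib)
      qed
      finally show ?thesis by (simp add: Z_def)
    qed
    have XZ0: "frob_inner X (Y ** S) = 0" for Y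
    proof -
      have "frob_inner X (((-1::real) *\<^sub>R Y) ** S) = - frob_inner X (Y ** S)"
        by (simp only: scalar_matrix_assoc[symmetric] frob_scale mult_minus1)
      thus ?thesis using XZ[of Y] XZ[of "(-1::real) *\<^sub>R Y"] by linarith
    qed
    have "frob_inner (X ** S) (X ** S) = 0"
      using XZ0[of "X ** S"] frob_swap[of S X "X ** S"] Ssym by (simp add: sym_iff)
    hence "\<forall>i\<in>UNIV. \<forall>j\<in>UNIV. (X ** S)$i$j * (X ** S)$i$j = 0"
      unfolding frob_sum
      by (simp add: sum_nonneg_eq_0_iff sum_nonneg)
    hence XS: "X ** S = 0" by (simp add: vec_eq_iff)
    have Xsym: "symmetric_mat X" using Gsym by (simp add: sym_iff Xent)
    have "0 \<le> x \<bullet> (X *v x)" for x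
    proof -
      define a :: "real^'n^'n" where "a = (\<chi> i j. x$i * x$j)"
      have "psd (S + t *\<^sub>R a + t^2 *\<^sub>R 0)" if "0 < t" for t
      proof -
        have "z \<bullet> ((S + t *\<^sub>R a + t^2 *\<^sub>R 0) *v z) = z \<bullet> (S *v z) + t * (z \<bullet> x)^2" for z
        proof -
          have "z \<bullet> ((S + t *\<^sub>R a + t^2 *\<^sub>R 0) *v z)
             = (\<Sum>i\<in>UNIV. \<Sum>j\<in>UNIV. z$i * S$i$j * z$j + t * ((z$i * x$i) * (z$j * x$j)))"
            unfolding qform_sum by (intro sum.cong refl) (simp add: a_def algebra_simps)
          also have "\<dots> = (\<Sum>i\<in>UNIV. \<Sum>j\<in>UNIV. z$i * S$i$j * z$j)
              + t * (\<Sum>i\<in>UNIV. \<Sum>j\<in>UNIV. (z$i * x$i) * (z$j * x$j))"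
            by (simp only: sum.distrib sum_distrib_left)
          also have "(\<Sum>i\<in>UNIV. \<Sum>j\<in>UNIV. (z$i * x$i) * (z$j * x$j)) = (z \<bullet> x)^2"
            by (simp only: power2_eq_square inner_vec_def inner_real_def sum_product)
          finally show ?thesis by (simp only: qform_sum)
        qed
        moreover have "0 \<le> z \<bullet> (S *v z) + t * (z \<bullet> x)^2" for z
          using Spsd that by (intro add_nonneg_nonneg) (auto simp: psd_def)
        ultimately show ?thesis using Ssym
          by (simp add: psd_def sym_iff a_def mult.commute)
      qed
      hence "0 \<le> (\<Sum>i\<in>UNIV. \<Sum>j\<in>UNIV. G$i$j * (a$i$j - S$i$j * (a$i$i + a$j$j)/2))"
        by (rule FO)
      also have "\<dots> = x \<bullet> (X *v x)"
      proof -
        have "x \<bullet> (X *v x) = x \<bullet> (G *v x) - x \<bullet> (Diag_mat (G ** S) *v x)"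
          by (simp add: X_def matrix_vector_mult_diff_rdistrib inner_diff_right)
        also have "x \<bullet> (Diag_mat (G ** S) *v x) = (\<Sum>i\<in>UNIV. a$i$i * (G**S)$i$i)"
          by (simp add: Diag_mv inner_vec_def a_def mult_ac)
        also have "x \<bullet> (G *v x) = (\<Sum>i\<in>UNIV. \<Sum>j\<in>UNIV. G$i$j * a$i$j)"
          by (simp add: qform_sum a_def mult_ac)
        finally show ?thesis unfolding split by simp
      qed
      finally show ?thesis .
    qed
    with Xsym XS show ?thesis by (simp add: psd_def)
  qed
  show ?thesis
    unfolding X_def[symmetric] using lin bwd fwd by blast
qed

end
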